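(* Let $\bar x\in S\subset\Phi=g^{-1}(K)$ and $d\in T_{\Phi,S}(\bar x)$. Then for every $\varepsilon>0$, $$T^2_{\Phi,S}(\bar x;d)\subset\{w\in\mathbb{R}^n:\nabla g(\bar x)w+\nabla^2g(\bar x)(d,d)\in T^2_{K,g_\varepsilon(S)}(g(\bar x);\nabla g(\bar x)d)\}$$ and $$T''_{\Phi,S}(\bar x;d)\subset\{w\in\mathbb{R}^n:\nabla g(\bar x)w\in T''_{K,g_\varepsilon(S)}(g(\bar x);\nabla g(\bar x)d)\},$$ where $g_\varepsilon(S):=g(S)+\varepsilon\,\mathrm{diam}(S)B_{\mathbb{R}^m}$.
   Context: $g:\mathbb{R}^n\to\mathbb{R}^m$ is twice continuously differentiable, $K\subset\mathbb{R}^m$ closed, $\Phi:=\{x:g(x)\in K\}$, $S\subset\Phi$; $g(S):=\{g(x):x\in S\}$; $B_{\mathbb{R}^m}$ is the closed unit ball and $\mathrm{diam}(S)$ the diameter of $S$ (if $\mathrm{diam}(S)=+\infty$, $g_\varepsilon(S)$ is read as $\mathbb{R}^m$). $\nabla^2g(x)(d,d):=(d^T\nabla^2g_i(x)d)_{i=1}^m$. For sets $\Lambda,A\subset\mathbb{R}^p$ and $\bar z\in\Lambda$: $T_{\Lambda,A}(\bar z):=\{d:\exists t_k\downarrow0,\ u_k\in A,u_k\to\bar z,\ d_k\to d,\ u_k+t_kd_k\in\Lambda\}$; for $d\in T_{\Lambda,A}(\bar z)$, the outer second-order tangent set with respect to $A$ is $T^2_{\Lambda,A}(\bar z;d):=\{w:\exists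 t_k\downarrow0,\ u_k\in A,u_k\to\bar z,\ w_k\to w,\ u_k+t_kd+\tfrac12t_k^2w_k\in\Lambda\}$, and the asymptotic second-order tangent cone with respect to $A$ is $T''_{\Lambda,A}(\bar z;d):=\{w:\exists(t_k,r_k)\downarrow(0,0),\ t_k/r_k\to0,\ u_k\in A,u_k\to\bar z,\ w_k\to w,\ u_k+t_kd+\tfrac12t_kr_kw_k\in\Lambda\}$. *)

theory Defs
  imports "HOL-Analysis.Analysis"
begin

definition tcone_rel :: "'a::real_normed_vector set \<Rightarrow> 'a set \<Rightarrow> 'a \<Rightarrow> 'a set" where
  "tcone_rel \<Lambda> A z = {d. \<exists>t u dd. (\<forall>k. t k > 0) \<and> t \<longlonglongrightarrow> 0 \<and>
      (\<forall>k. u k \<in> A) \<and> u \<longlonglongrightarrow> z \<and> dd \<longlonglongrightarrow> d \<and>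
      (\<forall>k. u k + t k *\<^sub>R dd k \<in> \<Lambda>)}"

definition tset2_rel :: "'a::real_normed_vector set \<Rightarrow> 'a set \<Rightarrow> 'a \<Rightarrow> 'a \<Rightarrow> 'a set" where
  "tset2_rel \<Lambda> A z d = {w. \<exists>t u ww. (\<forall>k. t k > 0) \<and> t \<longlonglongrightarrow> 0 \<and>
      (\<forall>k. u k \<in> A) \<and> u \<longlonglongrightarrow> z \<and> ww \<longlonglongrightarrow> w \<and>
      (\<forall>k. u k + t k *\<^sub>R d + ((t k)^2 / 2) *\<^sub>R ww k \<in> \<Lambda>)}"

definition tasym2_rel :: "'a::real_normed_vector set \<Rightarrow> 'a set \<Rightarrow> 'a \<Rightarrow> 'a \<Rightarrow> 'a set" where
  "tasym2_rel \<Lambda> A z d = {w. \<exists>t r u ww. (\<forall>k. t k > 0) \<and> (\<forall>k. r k > 0) \<and>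
      t \<longlonglongrightarrow> 0 \<and> r \<longlonglongrightarrow> 0 \<and> (\<lambda>k. t k / r k) \<longlonglongrightarrow> 0 \<and>
      (\<forall>k. u k \<in> A) \<and> u \<longlonglongrightarrow> z \<and> ww \<longlonglongrightarrow> w \<and>
      (\<forall>k. u k + t k *\<^sub>R d + (t k * r k / 2) *\<^sub>R ww k \<in> \<Lambda>)}"

text \<open>g_eps(S) = g(S) + eps diam(S) B; the whole space if S is unbounded (diam = +infinity).\<close>
definition g_eps :: "('a::real_normed_vector \<Rightarrow> 'b::real_normed_vector) \<Rightarrow> real \<Rightarrow> 'a set \<Rightarrow> 'b set" where
  "g_eps g \<epsilon> S = (if bounded S then {y + z | y z. y \<in> g ` S \<and> z \<in> cball 0 (\<epsilon> * diameter S)} else UNIV)"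

end

theory Submission
  imports Defs
begin

lemma line_deriv:
  fixes F :: "'n::real_normed_vector \<Rightarrow> 'b::real_normed_vector" and F' :: "'n \<Rightarrow> ('n \<Rightarrow>\<^sub>L 'b)"
  assumes FD: "\<And>x. (F has_derivative (\<lambda>v. blinfun_apply (F' x) v)) (at x)"
  shows "((\<lambda>s. F (u + s *\<^sub>R e)) has_derivative (\<lambda>h. h *\<^sub>R blinfun_apply (F' (u + s *\<^sub>R e)) e)) (at s within S)"
proof -
  have l: "((\<lambda>s. u + s *\<^sub>R e) has_derivative (\<lambda>h. h *\<^sub>R e)) (at s within S)"
    by (auto intro!: derivative_eq_intros)
  have "((\<lambda>s. F (u + s *\<^sub>R e)) has_derivative (\<lambda>h. blinfun_apply (F' (u + s *\<^sub>R e)) (h *\<^sub>R e))) (at s within S)"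
    by (rule has_derivative_compose[OF l FD])
  then show ?thesis by (simp add: blinfun.scaleR_right)
qed

lemma taylor2:
  fixes g :: "'n::euclidean_space \<Rightarrow> 'm::euclidean_space"
    and Dg :: "'n \<Rightarrow> ('n \<Rightarrow>\<^sub>L 'm)"
    and D2g :: "'n \<Rightarrow> ('n \<Rightarrow>\<^sub>L ('n \<Rightarrow>\<^sub>L 'm))"
  assumes g_D: "\<And>x. (g has_derivative (\<lambda>v. blinfun_apply (Dg x) v)) (at x)"
    and Dg_D: "\<And>x. (Dg has_derivative (\<lambda>v. blinfun_apply (D2g x) v)) (at x)"
    and t: "t \<ge> 0"
    and B: "\<And>s. s \<in> {0..t} \<Longrightarrow> norm (D2g (u + s *\<^sub>R e) - D2g u) \<le> B"
  shows "norm (g (u + t *\<^sub>R e) - g u - t *\<^sub>R Dg u e - (t^2/2) *\<^sub>R D2g u e e) \<le> B * norm e ^ 2 * t^2"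
proof -
  have B0: "B \<ge> 0" using B[of 0] t by auto
  have step1: "norm (Dg (u + s *\<^sub>R e) - Dg u - s *\<^sub>R D2g u e) \<le> s * (B * norm e)" if s: "s \<in> {0..t}" for s
  proof -
    have "norm ((\<lambda>s. Dg (u + s *\<^sub>R e)) s - (\<lambda>s. Dg (u + s *\<^sub>R e)) 0 - (\<lambda>h. h *\<^sub>R blinfun_apply (D2g (u + 0 *\<^sub>R e)) e) (s - 0)) \<le> norm (s - 0) * (B * norm e)"
    proof (rule differentiable_bound_linearization[where S="{0..t}"])
      show "0 + x *\<^sub>R (s - 0) \<in> {0..t}" if "x \<in> {0..1}" for x
        using that s by (auto intro: order_trans[OF mult_left_le_one_le])
      show "((\<lambda>s. Dg (u + s *\<^sub>R e)) has_derivative (\<lambda>h. h *\<^sub>R blinfun_apply (D2g (u + x *\<^sub>R e)) e)) (at x within {0..t})" for x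
        by (rule line_deriv[OF Dg_D])
      show "0 \<in> {0..t::real}" using t by auto
      show "onorm ((\<lambda>h. h *\<^sub>R blinfun_apply (D2g (u + x *\<^sub>R e)) e) - (\<lambda>h. h *\<^sub>R blinfun_apply (D2g (u + 0 *\<^sub>R e)) e)) \<le> B * norm e"
        if x: "x \<in> {0..t}" for x
      proof (rule onorm_bound)
        show "0 \<le> B * norm e" using B0 by simp
        fix h :: real
        have "norm (h *\<^sub>R blinfun_apply (D2g (u + x *\<^sub>R e)) e - h *\<^sub>R blinfun_apply (D2g (u + 0 *\<^sub>R e)) e)
            = \<bar>h\<bar> * norm (blinfun_apply (D2g (u + x *\<^sub>R e) - D2g u) e)"
          by (simp add: blinfun.diff_left flip: scaleR_diff_right)
        also have "\<dots> \<le> \<bar>h\<bar> * (norm (D2g (u + x *\<^sub>R e) - D2g u) * norm e)"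
          by (intro mult_left_mono norm_blinfun) auto
        also have "\<dots> \<le> \<bar>h\<bar> * (B * norm e)"
          by (intro mult_left_mono mult_right_mono B x) auto
        finally show "norm (((\<lambda>h. h *\<^sub>R blinfun_apply (D2g (u + x *\<^sub>R e)) e) - (\<lambda>h. h *\<^sub>R blinfun_apply (D2g (u + 0 *\<^sub>R e)) e)) h) \<le> B * norm e * norm h"
          by (simp add: mult_ac)
      qed
    qed
    then show ?thesis using s by simp
  qed
  define \<psi> where "\<psi> s = g (u + s *\<^sub>R e) - s *\<^sub>R Dg u e - (s^2/2) *\<^sub>R D2g u e e" for s
  have "norm (\<psi> t - \<psi> 0) \<le> (t * (B * norm e) * norm e) * norm (t - 0)"
  proof (rule differentiable_bound[where S="{0..t}" and f'="\<lambda>s h. h *\<^sub>R blinfun_apply (Dg (u + s *\<^sub>R e)) e - h *\<^sub>R Dg u e - (h * s) *\<^sub>R D2g u e e"])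
    show "convex {0..t}" by simp
    show "t \<in> {0..t}" "0 \<in> {0..t}" using t by auto
    fix x assume x: "x \<in> {0..t}"
    show "(\<psi> has_derivative (\<lambda>h. h *\<^sub>R blinfun_apply (Dg (u + x *\<^sub>R e)) e - h *\<^sub>R Dg u e - (h * x) *\<^sub>R D2g u e e)) (at x within {0..t})"
      unfolding \<psi>_def
      by (rule line_deriv[OF g_D] derivative_eq_intros refl | force simp: algebra_simps)+
    show "onorm (\<lambda>h. h *\<^sub>R blinfun_apply (Dg (u + x *\<^sub>R e)) e - h *\<^sub>R Dg u e - (h * x) *\<^sub>R D2g u e e) \<le> t * (B * norm e) * norm e"
    proof (rule onorm_bound)
      show "0 \<le> t * (B * norm e) * norm e" using B0 t by simp
      fix h :: real
      have "norm (h *\<^sub>R blinfun_apply (Dg (u + x *\<^sub>R e)) e - h *\<^sub>R Dg u e - (h * x) *\<^sub>R D2g u e e)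
          = \<bar>h\<bar> * norm (blinfun_apply (Dg (u + x *\<^sub>R e) - Dg u - x *\<^sub>R D2g u e) e)"
        by (simp add: blinfun.diff_left blinfun.scaleR_left flip: scaleR_diff_right scaleR_scaleR)
      also have "\<dots> \<le> \<bar>h\<bar> * (norm (Dg (u + x *\<^sub>R e) - Dg u - x *\<^sub>R D2g u e) * norm e)"
        by (intro mult_left_mono norm_blinfun) auto
      also have "\<dots> \<le> \<bar>h\<bar> * ((t * (B * norm e)) * norm e)"
        using x B0 by (intro mult_left_mono mult_right_mono order_trans[OF step1[OF x]] mult_right_mono) auto
      finally show "norm (h *\<^sub>R blinfun_apply (Dg (u + x *\<^sub>R e)) e - h *\<^sub>R Dg u e - (h * x) *\<^sub>R D2g u e e) \<le> t * (B * norm e) * norm e * norm h"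
        by (simp add: mult_ac)
    qed
  qed
  moreover have "\<psi> t - \<psi> 0 = g (u + t *\<^sub>R e) - g u - t *\<^sub>R Dg u e - (t^2/2) *\<^sub>R D2g u e e"
    by (simp add: \<psi>_def algebra_simps)
  ultimately show ?thesis using t by (simp add: power2_eq_square mult_ac)
qed

lemma tset2_evt:
  assumes "\<forall>k. t k > 0" "t \<longlonglongrightarrow> 0" "eventually (\<lambda>k. u k \<in> A) sequentially"
    "u \<longlonglongrightarrow> z" "ww \<longlonglongrightarrow> w" "\<forall>k. u k + t k *\<^sub>R d + ((t k)^2 / 2) *\<^sub>R ww k \<in> \<Lambda>"
  shows "w \<in> tset2_rel \<Lambda> A z d"
proof -
  from assms(3) obtain N where N: "\<And>k. k \<ge> N \<Longrightarrow> u k \<in> A" by (auto simp: eventually_sequentially)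
  show ?thesis unfolding tset2_rel_def
    apply (rule CollectI, rule exI[of _ "\<lambda>k. t (k + N)"], rule exI[of _ "\<lambda>k. u (k + N)"], rule exI[of _ "\<lambda>k. ww (k + N)"])
    using assms N by (auto simp: LIMSEQ_ignore_initial_segment)
qed

lemma tasym2_evt:
  assumes "\<forall>k. t k > 0" "\<forall>k. r k > 0" "t \<longlonglongrightarrow> 0" "r \<longlonglongrightarrow> 0" "(\<lambda>k. t k / r k) \<longlonglongrightarrow> 0"
    "eventually (\<lambda>k. u k \<in> A) sequentially"
    "u \<longlonglongrightarrow> z" "ww \<longlonglongrightarrow> w" "\<forall>k. u k + t k *\<^sub>R d + (t k * r k / 2) *\<^sub>R ww k \<in> \<Lambda>"
  shows "w \<in> tasym2_rel \<Lambda> A z d"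
proof -
  from assms(6) obtain N where N: "\<And>k. k \<ge> N \<Longrightarrow> u k \<in> A" by (auto simp: eventually_sequentially)
  have lim: "(\<lambda>k. t (k + N) / r (k + N)) \<longlonglongrightarrow> 0"
    using LIMSEQ_ignore_initial_segment[OF assms(5), of N] by simp
  show ?thesis unfolding tasym2_rel_def
    apply (rule CollectI, rule exI[of _ "\<lambda>k. t (k + N)"], rule exI[of _ "\<lambda>k. r (k + N)"], rule exI[of _ "\<lambda>k. u (k + N)"], rule exI[of _ "\<lambda>k. ww (k + N)"])
    using lim assms N by (auto simp: LIMSEQ_ignore_initial_segment)
qed

lemma key_remainder:
  fixes g :: "'n::euclidean_space \<Rightarrow> 'm::euclidean_space"
    and Dg :: "'n \<Rightarrow> ('n \<Rightarrow>\<^sub>L 'm)"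
    and D2g :: "'n \<Rightarrow> ('n \<Rightarrow>\<^sub>L ('n \<Rightarrow>\<^sub>L 'm))"
  assumes g_D: "\<And>x. (g has_derivative (\<lambda>v. blinfun_apply (Dg x) v)) (at x)"
    and Dg_D: "\<And>x. (Dg has_derivative (\<lambda>v. blinfun_apply (D2g x) v)) (at x)"
    and cont: "isCont D2g xb"
    and u: "u \<longlonglongrightarrow> xb" and t: "t \<longlonglongrightarrow> 0" and tpos: "\<forall>k. t k > 0" and e: "e \<longlonglongrightarrow> d"
  shows "(\<lambda>k. (1 / (t k)^2) *\<^sub>R (g (u k + t k *\<^sub>R e k) - g (u k) - t k *\<^sub>R Dg (u k) (e k)
            - ((t k)^2/2) *\<^sub>R D2g (u k) (e k) (e k))) \<longlonglongrightarrow> 0"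
  unfolding tendsto_iff
proof (intro allI impI)
  fix \<eta> :: real assume \<eta>: "\<eta> > 0"
  define C where "C = (norm d + 1)^2"
  have C: "C > 0" unfolding C_def using norm_ge_zero[of d] by (intro zero_less_power) linarith
  define \<eta>' where "\<eta>' = \<eta> / (2 * C)"
  have \<eta>': "\<eta>' > 0" using \<eta> C by (simp add: \<eta>'_def)
  obtain \<delta> where \<delta>: "\<delta> > 0" "\<And>z. dist z xb < \<delta> \<Longrightarrow> dist (D2g z) (D2g xb) < \<eta>' / 2"
    using cont \<eta>' unfolding continuous_at_eps_delta by (metis half_gt_zero)
  have ev1: "eventually (\<lambda>k. dist (u k) xb < \<delta>/2) sequentially"
    using u half_gt_zero[OF \<delta>(1)] unfolding tendsto_iff by blast
  have "(\<lambda>k. t k *\<^sub>R e k) \<longlonglongrightarrow> 0 *\<^sub>R d" by (intro tendsto_intros t e)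
  then have "(\<lambda>k. norm (t k *\<^sub>R e k)) \<longlonglongrightarrow> 0" by (intro tendsto_norm_zero) simp
  then have ev2: "eventually (\<lambda>k. norm (t k *\<^sub>R e k) < \<delta>/2) sequentially"
    using half_gt_zero[OF \<delta>(1)] by (rule order_tendstoD)
  have "(\<lambda>k. norm (e k)) \<longlonglongrightarrow> norm d" by (intro tendsto_intros e)
  then have ev3: "eventually (\<lambda>k. norm (e k) < norm d + 1) sequentially"
    by (rule order_tendstoD) simp
  show "eventually (\<lambda>k. dist ((1 / (t k)^2) *\<^sub>R (g (u k + t k *\<^sub>R e k) - g (u k) - t k *\<^sub>R Dg (u k) (e k)
            - ((t k)^2/2) *\<^sub>R D2g (u k) (e k) (e k))) 0 < \<eta>) sequentially"
    using ev1 ev2 ev3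
  proof eventually_elim
    case (elim k)
    have tk: "t k > 0" using tpos by auto
    have B: "norm (D2g (u k + s *\<^sub>R e k) - D2g (u k)) \<le> \<eta>'" if s: "s \<in> {0..t k}" for s
    proof -
      have "norm (s *\<^sub>R e k) \<le> norm (t k *\<^sub>R e k)" using s by (auto intro: mult_right_mono)
      moreover have "norm (u k + s *\<^sub>R e k - xb) \<le> norm (u k - xb) + norm (s *\<^sub>R e k)"
        using norm_triangle_ineq[of "u k - xb" "s *\<^sub>R e k"] by (simp add: algebra_simps)
      ultimately have "dist (u k + s *\<^sub>R e k) xb < \<delta>" using elim(1,2)
        by (simp add: dist_norm)
      then have "dist (D2g (u k + s *\<^sub>R e k)) (D2g xb) < \<eta>'/2" by (rule \<delta>(2))
      moreover have "dist (D2g (u k)) (D2g xb) < \<eta>'/2" using elim(1) \<delta> by auto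
      moreover have "D2g (u k + s *\<^sub>R e k) - D2g (u k) = (D2g (u k + s *\<^sub>R e k) - D2g xb) - (D2g (u k) - D2g xb)" by simp
      then have "norm (D2g (u k + s *\<^sub>R e k) - D2g (u k)) \<le> norm (D2g (u k + s *\<^sub>R e k) - D2g xb) + norm (D2g (u k) - D2g xb)"
        by (metis norm_triangle_ineq4)
      ultimately show ?thesis by (simp add: dist_norm)
    qed
    have T: "norm (g (u k + t k *\<^sub>R e k) - g (u k) - t k *\<^sub>R Dg (u k) (e k) - ((t k)^2/2) *\<^sub>R D2g (u k) (e k) (e k))
        \<le> \<eta>' * norm (e k) ^ 2 * (t k)^2"
      by (rule taylor2[OF g_D Dg_D]) (use tk B in auto)
    have "norm (e k) ^ 2 \<le> C" unfolding C_def using elim(3) by (intro power_mono) auto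
    then have "\<eta>' * norm (e k) ^ 2 \<le> \<eta>' * C" using \<eta>' by simp
    also have "\<dots> < \<eta>" using \<eta> C by (simp add: \<eta>'_def)
    finally have lt: "\<eta>' * norm (e k) ^ 2 < \<eta>" .
    have "dist ((1 / (t k)^2) *\<^sub>R (g (u k + t k *\<^sub>R e k) - g (u k) - t k *\<^sub>R Dg (u k) (e k)
            - ((t k)^2/2) *\<^sub>R D2g (u k) (e k) (e k))) 0 \<le> (1 / (t k)^2) * (\<eta>' * norm (e k) ^ 2 * (t k)^2)"
      using T tk by (simp add: divide_simps)
    also have "\<dots> = \<eta>' * norm (e k) ^ 2" using tk by simp
    finally show ?case using lt by linarith
  qed
qed


theorem proposition4p3:
  fixes g :: "'n::euclidean_space \<Rightarrow> 'm::euclidean_space"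
    and Dg :: "'n \<Rightarrow> ('n \<Rightarrow>\<^sub>L 'm)"
    and D2g :: "'n \<Rightarrow> ('n \<Rightarrow>\<^sub>L ('n \<Rightarrow>\<^sub>L 'm))"
    and K :: "'m set" and S :: "'n set" and xb d :: 'n and \<epsilon> :: real
  assumes g_D: "\<And>x. (g has_derivative (\<lambda>v. blinfun_apply (Dg x) v)) (at x)"
    and Dg_D: "\<And>x. (Dg has_derivative (\<lambda>v. blinfun_apply (D2g x) v)) (at x)"
    and D2g_cont: "continuous_on UNIV D2g"
    and K_closed: "closed K"
    and S_sub: "S \<subseteq> {x. g x \<in> K}"
    and xb_S: "xb \<in> S"
    and d_T: "d \<in> tcone_rel {x. g x \<in> K} S xb"
    and eps_pos: "\<epsilon> > 0"
  shows "tset2_rel {x. g x \<in> K} S xb d \<subseteq>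
           {w. Dg xb w + D2g xb d d \<in> tset2_rel K (g_eps g \<epsilon> S) (g xb) (Dg xb d)}
       \<and> tasym2_rel {x. g x \<in> K} S xb d \<subseteq>
           {w. Dg xb w \<in> tasym2_rel K (g_eps g \<epsilon> S) (g xb) (Dg xb d)}"
proof -
  have contDg: "\<And>x. isCont Dg x" using Dg_D has_derivative_continuous by blast
  have contg: "\<And>x. isCont g x" using g_D has_derivative_continuous by blast
  have cont2: "isCont D2g xb" using D2g_cont by (simp add: continuous_on_eq_continuous_at)
  have "compact (D2g ` cball xb 1)"
    by (intro compact_continuous_image continuous_on_subset[OF D2g_cont]) auto
  then obtain M where M: "M > 0" "\<And>z. z \<in> cball xb 1 \<Longrightarrow> norm (D2g z) \<le> M"
    by (auto dest!: compact_imp_bounded simp: bounded_pos)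
  have Lip: "norm (Dg u - Dg xb) \<le> M * norm (u - xb)" if "u \<in> cball xb 1" for u
  proof (rule differentiable_bound[of "cball xb 1" Dg "\<lambda>x. blinfun_apply (D2g x)"])
    show "convex (cball xb 1)" by simp
    show "(Dg has_derivative blinfun_apply (D2g x)) (at x within cball xb 1)" for x
      using has_derivative_at_withinI[OF Dg_D] by simp
    show "onorm (blinfun_apply (D2g x)) \<le> M" if "x \<in> cball xb 1" for x
      using M(2)[OF that] by (simp add: norm_blinfun.rep_eq)
  qed (use that in auto)
  have vlemma: "eventually (\<lambda>k. g (u k) + t k *\<^sub>R (Dg (u k) d - Dg xb d) \<in> g_eps g \<epsilon> S) sequentially
      \<and> (\<lambda>k. g (u k) + t k *\<^sub>R (Dg (u k) d - Dg xb d)) \<longlonglongrightarrow> g xb"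
    if tpos: "\<forall>k. t k > 0" and t: "t \<longlonglongrightarrow> 0" and uS: "\<forall>k. u k \<in> S" and u: "u \<longlonglongrightarrow> xb" for t u
  proof
    have "(\<lambda>k. g (u k) + t k *\<^sub>R (Dg (u k) d - Dg xb d)) \<longlonglongrightarrow> g xb + 0 *\<^sub>R (Dg xb d - Dg xb d)"
      by (intro tendsto_intros isCont_tendsto_compose[OF contg u] isCont_tendsto_compose[OF contDg u] t u)
    then show "(\<lambda>k. g (u k) + t k *\<^sub>R (Dg (u k) d - Dg xb d)) \<longlonglongrightarrow> g xb" by simp
    show "eventually (\<lambda>k. g (u k) + t k *\<^sub>R (Dg (u k) d - Dg xb d) \<in> g_eps g \<epsilon> S) sequentially"
    proof (cases "bounded S")
      case False then show ?thesis by (simp add: g_eps_def)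
    next
      case True
      have ev1: "eventually (\<lambda>k. dist (u k) xb < 1) sequentially"
        using u unfolding tendsto_iff by simp
      have "(\<lambda>k. t k * (M * norm d)) \<longlonglongrightarrow> 0 * (M * norm d)" by (intro tendsto_intros t)
      then have ev2: "eventually (\<lambda>k. t k * (M * norm d) < \<epsilon>) sequentially"
        using eps_pos by (intro order_tendstoD) auto
      show ?thesis using ev1 ev2
      proof eventually_elim
        case (elim k)
        have uc: "u k \<in> cball xb 1" using elim(1) by (simp add: dist_commute)
        have tk: "t k > 0" using tpos by auto
        have dS: "norm (u k - xb) \<le> diameter S"
          using diameter_bounded_bound[OF True uS[rule_format] xb_S] by (simp add: dist_norm)
        have "norm (t k *\<^sub>R (Dg (u k) d - Dg xb d)) = t k * norm (blinfun_apply (Dg (u k) - Dg xb) d)"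
          using tk by (simp add: blinfun.diff_left)
        also have "\<dots> \<le> t k * (norm (Dg (u k) - Dg xb) * norm d)"
          using tk by (intro mult_left_mono norm_blinfun) auto
        also have "\<dots> \<le> t k * (M * norm (u k - xb) * norm d)"
          using tk by (intro mult_left_mono mult_right_mono Lip uc) auto
        also have "\<dots> = (t k * (M * norm d)) * norm (u k - xb)" by (simp add: mult_ac)
        also have "\<dots> \<le> \<epsilon> * diameter S"
          using elim(2) dS tk M(1) eps_pos by (intro mult_mono) auto
        finally have "t k *\<^sub>R (Dg (u k) d - Dg xb d) \<in> cball 0 (\<epsilon> * diameter S)" by simp
        moreover have "g (u k) \<in> g ` S" using uS by auto
        ultimately show ?case unfolding g_eps_def if_P[OF True] by blast
      qed
    qed
  qed
  have part1: "Dg xb w + D2g xb d d \<in> tset2_rel K (g_eps g \<epsilon> S) (g xb) (Dg xb d)"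
    if w_in: "w \<in> tset2_rel {x. g x \<in> K} S xb d" for w
  proof -
    obtain t u ww where tpos: "\<forall>k. t k > 0" and t: "t \<longlonglongrightarrow> 0" and uS: "\<forall>k. u k \<in> S"
      and u: "u \<longlonglongrightarrow> xb" and ww: "ww \<longlonglongrightarrow> w"
      and inK: "\<forall>k. g (u k + t k *\<^sub>R d + ((t k)^2 / 2) *\<^sub>R ww k) \<in> K"
      using w_in unfolding tset2_rel_def by blast
    define e where "e k = d + (t k / 2) *\<^sub>R ww k" for k
    have "(\<lambda>k. d + (t k / 2) *\<^sub>R ww k) \<longlonglongrightarrow> d + (0 / 2) *\<^sub>R w" by (intro tendsto_intros t ww) auto
    then have e: "e \<longlonglongrightarrow> d" by (simp add: e_def[abs_def])
    have xe: "u k + t k *\<^sub>R d + ((t k)^2 / 2) *\<^sub>R ww k = u k + t k *\<^sub>R e k" for k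
      by (simp add: e_def scaleR_add_right power2_eq_square)
    define v where "v k = g (u k) + t k *\<^sub>R (Dg (u k) d - Dg xb d)" for k
    define R where "R k = g (u k + t k *\<^sub>R e k) - g (u k) - t k *\<^sub>R Dg (u k) (e k) - ((t k)^2/2) *\<^sub>R D2g (u k) (e k) (e k)" for k
    define z where "z k = (2 / (t k)^2) *\<^sub>R (g (u k + t k *\<^sub>R e k) - v k - t k *\<^sub>R Dg xb d)" for k
    have zeq: "z k = (Dg (u k) (ww k) + D2g (u k) (e k) (e k)) + (2::real) *\<^sub>R ((1 / (t k)^2) *\<^sub>R R k)" for k
    proof -
      have tk: "t k \<noteq> 0" using tpos by (metis less_irrefl)
      have de: "Dg (u k) (e k) = Dg (u k) d + (t k / 2) *\<^sub>R Dg (u k) (ww k)"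
        by (simp add: e_def blinfun.add_right blinfun.scaleR_right)
      have id: "g (u k + t k *\<^sub>R e k) - v k - t k *\<^sub>R Dg xb d = R k + ((t k)^2/2) *\<^sub>R (Dg (u k) (ww k) + D2g (u k) (e k) (e k))"
        by (simp add: R_def v_def de algebra_simps power2_eq_square)
      show ?thesis using tk by (simp add: z_def id scaleR_add_right)
    qed
    have "z \<longlonglongrightarrow> (Dg xb w + D2g xb d d) + (2::real) *\<^sub>R 0"
      unfolding zeq[abs_def]
      by (intro tendsto_intros isCont_tendsto_compose[OF contDg u] isCont_tendsto_compose[OF cont2 u] ww e
          key_remainder[OF g_D Dg_D cont2 u t tpos e, folded R_def])
    then have z: "z \<longlonglongrightarrow> Dg xb w + D2g xb d d" by simp
    have mem: "\<forall>k. v k + t k *\<^sub>R Dg xb d + ((t k)^2/2) *\<^sub>R z k \<in> K"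
    proof
      fix k
      have tk: "t k \<noteq> 0" using tpos by (metis less_irrefl)
      have "v k + t k *\<^sub>R Dg xb d + ((t k)^2/2) *\<^sub>R z k = g (u k + t k *\<^sub>R e k)"
        using tk by (simp add: z_def)
      then show "v k + t k *\<^sub>R Dg xb d + ((t k)^2/2) *\<^sub>R z k \<in> K" using inK xe by metis
    qed
    show ?thesis
      using tset2_evt[OF tpos t _ _ z mem] vlemma[OF tpos t uS u] by (simp add: v_def[abs_def])
  qed
  have part2: "Dg xb w \<in> tasym2_rel K (g_eps g \<epsilon> S) (g xb) (Dg xb d)"
    if w_in: "w \<in> tasym2_rel {x. g x \<in> K} S xb d" for w
  proof -
    obtain t r u ww where tpos: "\<forall>k. t k > 0" and rpos: "\<forall>k. r k > 0" and t: "t \<longlonglongrightarrow> 0"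
      and r: "r \<longlonglongrightarrow> 0" and tr: "(\<lambda>k. t k / r k) \<longlonglongrightarrow> 0" and uS: "\<forall>k. u k \<in> S"
      and u: "u \<longlonglongrightarrow> xb" and ww: "ww \<longlonglongrightarrow> w"
      and inK: "\<forall>k. g (u k + t k *\<^sub>R d + (t k * r k / 2) *\<^sub>R ww k) \<in> K"
      using w_in unfolding tasym2_rel_def by blast
    define e where "e k = d + (r k / 2) *\<^sub>R ww k" for k
    have "(\<lambda>k. d + (r k / 2) *\<^sub>R ww k) \<longlonglongrightarrow> d + (0 / 2) *\<^sub>R w" by (intro tendsto_intros r ww) auto
    then have e: "e \<longlonglongrightarrow> d" by (simp add: e_def[abs_def])
    have xe: "u k + t k *\<^sub>R d + (t k * r k / 2) *\<^sub>R ww k = u k + t k *\<^sub>R e k" for k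
      by (simp add: e_def scaleR_add_right)
    define v where "v k = g (u k) + t k *\<^sub>R (Dg (u k) d - Dg xb d)" for k
    define R where "R k = g (u k + t k *\<^sub>R e k) - g (u k) - t k *\<^sub>R Dg (u k) (e k) - ((t k)^2/2) *\<^sub>R D2g (u k) (e k) (e k)" for k
    define z where "z k = (2 / (t k * r k)) *\<^sub>R (g (u k + t k *\<^sub>R e k) - v k - t k *\<^sub>R Dg xb d)" for k
    have zeq: "z k = Dg (u k) (ww k) + (t k / r k) *\<^sub>R D2g (u k) (e k) (e k) + (2 * (t k / r k)) *\<^sub>R ((1 / (t k)^2) *\<^sub>R R k)" for k
    proof -
      have tk: "t k \<noteq> 0" using tpos by (metis less_irrefl)
      have rk: "r k \<noteq> 0" using rpos by (metis less_irrefl)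
      have de: "Dg (u k) (e k) = Dg (u k) d + (r k / 2) *\<^sub>R Dg (u k) (ww k)"
        by (simp add: e_def blinfun.add_right blinfun.scaleR_right)
      have id: "g (u k + t k *\<^sub>R e k) - v k - t k *\<^sub>R Dg xb d = R k + (t k * r k/2) *\<^sub>R Dg (u k) (ww k) + ((t k)^2/2) *\<^sub>R D2g (u k) (e k) (e k)"
        by (simp add: R_def v_def de algebra_simps power2_eq_square)
      have c1: "(2 / (t k * r k)) * (t k * r k / 2) = 1" using tk rk by simp
      have c2: "(2 / (t k * r k)) * ((t k)^2 / 2) = t k / r k" using tk rk by (simp add: power2_eq_square)
      have c3: "2 / (t k * r k) = (2 * (t k / r k)) * (1 / (t k)^2)" using tk rk by (simp add: power2_eq_square)
      have "z k = (2 / (t k * r k)) *\<^sub>R R k + ((2 / (t k * r k)) * (t k * r k / 2)) *\<^sub>R Dg (u k) (ww k)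
          + ((2 / (t k * r k)) * ((t k)^2 / 2)) *\<^sub>R D2g (u k) (e k) (e k)"
        by (simp only: z_def id scaleR_add_right scaleR_scaleR)
      also have "\<dots> = (2 * (t k / r k)) *\<^sub>R ((1 / (t k)^2) *\<^sub>R R k) + Dg (u k) (ww k) + (t k / r k) *\<^sub>R D2g (u k) (e k) (e k)"
        by (simp only: c1 c2 scaleR_one, simp only: c3 scaleR_scaleR)
      finally show ?thesis by (simp add: algebra_simps)
    qed
    have "z \<longlonglongrightarrow> Dg xb w + 0 *\<^sub>R D2g xb d d + (2 * 0) *\<^sub>R 0"
      unfolding zeq[abs_def]
      by (intro tendsto_intros isCont_tendsto_compose[OF contDg u] isCont_tendsto_compose[OF cont2 u] ww e tr
          key_remainder[OF g_D Dg_D cont2 u t tpos e, folded R_def])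
    then have z: "z \<longlonglongrightarrow> Dg xb w" by simp
    have mem: "\<forall>k. v k + t k *\<^sub>R Dg xb d + (t k * r k / 2) *\<^sub>R z k \<in> K"
    proof
      fix k
      have tk: "t k \<noteq> 0" using tpos by (metis less_irrefl)
      have rk: "r k \<noteq> 0" using rpos by (metis less_irrefl)
      have "v k + t k *\<^sub>R Dg xb d + (t k * r k / 2) *\<^sub>R z k = g (u k + t k *\<^sub>R e k)"
        using tk rk by (simp add: z_def)
      then show "v k + t k *\<^sub>R Dg xb d + (t k * r k / 2) *\<^sub>R z k \<in> K" using inK xe by metis
    qed
    show ?thesis
      using tasym2_evt[OF tpos rpos t r tr _ _ z mem] vlemma[OF tpos t uS u] by (simp add: v_def[abs_def])
  qed
  show ?thesis using part1 part2 by blast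
qed

end
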